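(* Assume $\mathbf A$ has full column rank, $\mathrm{var}(\tilde{\mathbf x})>0$, $\mathrm{var}(\tilde{\mathbf y})>0$, and $\boldsymbol\Pi_{\mathbf A}^\perp\dot{\mathbf a}_{\mathrm u}(\tilde{\mathbf q},\mathbf r_k)\neq\mathbf 0$, $\boldsymbol\Pi_{\mathbf A}^\perp\dot{\mathbf a}_{\mathrm v}(\tilde{\mathbf q},\mathbf r_k)\neq\mathbf 0$. Then for each $k$, $$\omega_{\mathrm u,k}\le\frac{4\pi^2N}{\lambda^2}\Big(\mathrm{var}(\tilde{\mathbf x})-\frac{\mathrm{cov}(\tilde{\mathbf x},\tilde{\mathbf y})^2}{\mathrm{var}(\tilde{\mathbf y})}\Big),\qquad \omega_{\mathrm v,k}\le\frac{4\pi^2N}{\lambda^2}\Big(\mathrm{var}(\tilde{\mathbf y})-\frac{\mathrm{cov}(\tilde{\mathbf x},\tilde{\mathbf y})^2}{\mathrm{var}(\tilde{\mathbf x})}\Big),$$ with equality in the first inequality if and only if $\mathbf A^{\mathsf H}\boldsymbol\Pi_k^\perp\big(\dot{\mathbf a}_{\mathrm u}(\tilde{\mathbf q},\mathbf r_k)-\zeta^*_{\mathrm u,k}\dot{\mathbf a}_{\mathrm v}(\tilde{\mathbf q},\mathbf r_k)\big)=\mathbf 0_{K\times1}$, and equality in the second if and only if $\mathbf A^{\mathsf H}\boldsymbol\Pi_k^\perp\big(\dot{\mathbf a}_{\mathrm v}(\tilde{\mathbf q},\mathbf r_k)-\zeta^*_{\mathrm v,k}\dot{\mathbf a}_{\mathrm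 u}(\tilde{\mathbf q},\mathbf r_k)\big)=\mathbf 0_{K\times1}$.
   Context: Fix $N>K\ge1$, $\lambda>0$. Antenna positions $\mathbf q_n=[x_n,y_n]^{\mathsf T}\in\mathbb R^2$ ($n=1,\dots,N$), $\tilde{\mathbf x}=[x_1,\dots,x_N]^{\mathsf T}$, $\tilde{\mathbf y}=[y_1,\dots,y_N]^{\mathsf T}$; target coordinates $\mathbf r_k=[u_k,v_k]^{\mathsf T}\in\mathbb R^2$, $k=1,\dots,K$. Steering vector $\mathbf a(\tilde{\mathbf q},\mathbf r)\in\mathbb C^N$ with $n$-th entry $e^{\mathrm j\frac{2\pi}{\lambda}\mathbf q_n^{\mathsf T}\mathbf r}$; $\mathbf A=[\mathbf a(\tilde{\mathbf q},\mathbf r_1),\dots,\mathbf a(\tilde{\mathbf q},\mathbf r_K)]$. $\dot{\mathbf a}_{\mathrm u}(\tilde{\mathbf q},\mathbf r_k)$ has $n$-th entry $\mathrm j\frac{2\pi}{\lambda}x_ne^{\mathrm j\frac{2\pi}{\lambda}\mathbf q_n^{\mathsf T}\mathbf r_k}$ and $\dot{\mathbf a}_{\mathrm v}(\tilde{\mathbf q},\mathbf r_k)$ has $n$-th entry $\mathrm j\frac{2\pi}{\lambda}y_ne^{\mathrm j\frac{2\pi}{\lambda}\mathbf q_n^{\mathsf T}\mathbf r_k}$. $\boldsymbol\Pi_{\mathbf A}^\perp=\mathbf I_N-\mathbf A(\mathbf A^{\mathsf H}\mathbf A)^{-1}\mathbf A^{\mathsf H}$ and $\boldsymbol\Pi_k^\perp=\mathbf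 I_N-\mathbf a(\tilde{\mathbf q},\mathbf r_k)\mathbf a(\tilde{\mathbf q},\mathbf r_k)^{\mathsf H}/\|\mathbf a(\tilde{\mathbf q},\mathbf r_k)\|_2^2$. Effective sensitivity powers: $\omega_{\mathrm u,k}=\min_{\zeta\in\mathbb R}\|\boldsymbol\Pi_{\mathbf A}^\perp(\dot{\mathbf a}_{\mathrm u}(\tilde{\mathbf q},\mathbf r_k)-\zeta\dot{\mathbf a}_{\mathrm v}(\tilde{\mathbf q},\mathbf r_k))\|_2^2=\|\boldsymbol\Pi_{\mathbf A}^\perp\dot{\mathbf a}_{\mathrm u}\|_2^2-\frac{\Re\{\dot{\mathbf a}_{\mathrm u}^{\mathsf H}\boldsymbol\Pi_{\mathbf A}^\perp\dot{\mathbf a}_{\mathrm v}\}^2}{\|\boldsymbol\Pi_{\mathbf A}^\perp\dot{\mathbf a}_{\mathrm v}\|_2^2}$ and $\omega_{\mathrm v,k}=\min_{\zeta\in\mathbb R}\|\boldsymbol\Pi_{\mathbf A}^\perp(\dot{\mathbf a}_{\mathrm v}-\zeta\dot{\mathbf a}_{\mathrm u})\|_2^2=\|\boldsymbol\Pi_{\mathbf A}^\perp\dot{\mathbf a}_{\mathrm v}\|_2^2-\frac{\Re\{\dot{\mathbf a}_{\mathrm u}^{\mathsf H}\boldsymbol\Pi_{\mathbf A}^\perp\dot{\mathbf a}_{\mathrm v}\}^2}{\|\boldsymbol\Pi_{\mathbf A}^\perp\dot{\mathbf a}_{\mathrm u}\|_2^2}$ (all vectors evaluated at $(\tilde{\mathbf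 q},\mathbf r_k)$). Further $\zeta^*_{\mathrm u,k}=\frac{\Re\{\dot{\mathbf a}_{\mathrm u}^{\mathsf H}\boldsymbol\Pi_k^\perp\dot{\mathbf a}_{\mathrm v}\}}{\|\boldsymbol\Pi_k^\perp\dot{\mathbf a}_{\mathrm v}\|_2^2}$ and $\zeta^*_{\mathrm v,k}=\frac{\Re\{\dot{\mathbf a}_{\mathrm u}^{\mathsf H}\boldsymbol\Pi_k^\perp\dot{\mathbf a}_{\mathrm v}\}}{\|\boldsymbol\Pi_k^\perp\dot{\mathbf a}_{\mathrm u}\|_2^2}$. $\mu(\tilde{\mathbf x})=\frac1N\sum_nx_n$, $\mathrm{var}(\tilde{\mathbf x})=\frac1N\sum_n(x_n-\mu(\tilde{\mathbf x}))^2$ (same for $\tilde{\mathbf y}$), $\mathrm{cov}(\tilde{\mathbf x},\tilde{\mathbf y})=\frac1N\sum_n(x_n-\mu(\tilde{\mathbf x}))(y_n-\mu(\tilde{\mathbf y}))$. *)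

theory Defs
  imports "HOL-Analysis.Analysis"
begin

text \<open>Antennas indexed by a finite type 'n (N = CARD('n)), targets by a finite type 'k
  (K = CARD('k)). Antenna n is at (x n, y n); target k is at (u k, v k).\<close>

definition cinner :: "complex^'n \<Rightarrow> complex^'n \<Rightarrow> complex" where
  "cinner a b = (\<Sum>i\<in>UNIV. cnj (a$i) * b$i)"

definition normsq :: "complex^'n \<Rightarrow> real" where
  "normsq a = (\<Sum>i\<in>UNIV. (cmod (a$i))^2)"

definition hermitian_transpose :: "complex^'n^'m \<Rightarrow> complex^'m^'n" where
  "hermitian_transpose M = (\<chi> i j. cnj (M$j$i))"

definition steer :: "real \<Rightarrow> ('n \<Rightarrow> real) \<Rightarrow> ('n \<Rightarrow> real) \<Rightarrow> real \<Rightarrow> real \<Rightarrow> complex^'n" where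
  "steer lam x y u v = (\<chi> n. cis (2*pi/lam * (x n * u + y n * v)))"

definition steer_du :: "real \<Rightarrow> ('n \<Rightarrow> real) \<Rightarrow> ('n \<Rightarrow> real) \<Rightarrow> real \<Rightarrow> real \<Rightarrow> complex^'n" where
  "steer_du lam x y u v = (\<chi> n. \<i> * complex_of_real (2*pi/lam * x n) * cis (2*pi/lam * (x n * u + y n * v)))"

definition steer_dv :: "real \<Rightarrow> ('n \<Rightarrow> real) \<Rightarrow> ('n \<Rightarrow> real) \<Rightarrow> real \<Rightarrow> real \<Rightarrow> complex^'n" where
  "steer_dv lam x y u v = (\<chi> n. \<i> * complex_of_real (2*pi/lam * y n) * cis (2*pi/lam * (x n * u + y n * v)))"

definition steer_mat :: "real \<Rightarrow> ('n \<Rightarrow> real) \<Rightarrow> ('n \<Rightarrow> real) \<Rightarrow> ('k \<Rightarrow> real) \<Rightarrow> ('k \<Rightarrow> real) \<Rightarrow> complex^'k^'n" where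
  "steer_mat lam x y u v = (\<chi> n k. steer lam x y (u k) (v k) $ n)"

definition proj_perp :: "complex^'k^'n \<Rightarrow> complex^'n^'n" where
  "proj_perp A = mat 1 - A ** matrix_inv (hermitian_transpose A ** A) ** hermitian_transpose A"

definition proj_perp_vec :: "complex^'n \<Rightarrow> complex^'n^'n" where
  "proj_perp_vec a = mat 1 - (\<chi> i j. a$i * cnj (a$j) / complex_of_real (normsq a))"

definition mean :: "('n::finite \<Rightarrow> real) \<Rightarrow> real" where
  "mean x = (\<Sum>n\<in>UNIV. x n) / real CARD('n)"

definition var :: "('n::finite \<Rightarrow> real) \<Rightarrow> real" where
  "var x = (\<Sum>n\<in>UNIV. (x n - mean x)^2) / real CARD('n)"

definition cov :: "('n::finite \<Rightarrow> real) \<Rightarrow> ('n \<Rightarrow> real) \<Rightarrow> real" where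
  "cov x y = (\<Sum>n\<in>UNIV. (x n - mean x) * (y n - mean y)) / real CARD('n)"

definition omega_u :: "real \<Rightarrow> ('n::finite \<Rightarrow> real) \<Rightarrow> ('n \<Rightarrow> real) \<Rightarrow> ('k::finite \<Rightarrow> real) \<Rightarrow> ('k \<Rightarrow> real) \<Rightarrow> 'k \<Rightarrow> real" where
  "omega_u lam x y u v k = (INF \<zeta>::real. normsq (proj_perp (steer_mat lam x y u v) *v
      (steer_du lam x y (u k) (v k) - complex_of_real \<zeta> *s steer_dv lam x y (u k) (v k))))"

definition omega_v :: "real \<Rightarrow> ('n::finite \<Rightarrow> real) \<Rightarrow> ('n \<Rightarrow> real) \<Rightarrow> ('k::finite \<Rightarrow> real) \<Rightarrow> ('k \<Rightarrow> real) \<Rightarrow> 'k \<Rightarrow> real" where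
  "omega_v lam x y u v k = (INF \<zeta>::real. normsq (proj_perp (steer_mat lam x y u v) *v
      (steer_dv lam x y (u k) (v k) - complex_of_real \<zeta> *s steer_du lam x y (u k) (v k))))"

definition zeta_u :: "real \<Rightarrow> ('n::finite \<Rightarrow> real) \<Rightarrow> ('n \<Rightarrow> real) \<Rightarrow> real \<Rightarrow> real \<Rightarrow> real" where
  "zeta_u lam x y uk vk = (let P = proj_perp_vec (steer lam x y uk vk);
      au = steer_du lam x y uk vk; av = steer_dv lam x y uk vk
    in Re (cinner au (P *v av)) / normsq (P *v av))"

definition zeta_v :: "real \<Rightarrow> ('n::finite \<Rightarrow> real) \<Rightarrow> ('n \<Rightarrow> real) \<Rightarrow> real \<Rightarrow> real \<Rightarrow> real" where
  "zeta_v lam x y uk vk = (let P = proj_perp_vec (steer lam x y uk vk);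
      au = steer_du lam x y uk vk; av = steer_dv lam x y uk vk
    in Re (cinner au (P *v av)) / normsq (P *v au))"

end

theory Submission
  imports Defs
begin

lemma normsq_inner: "normsq a = inner a a"
  unfolding normsq_def inner_vec_def by (simp add: power2_norm_eq_inner)

lemma normsq_norm: "normsq a = (norm a)^2"
  by (simp add: normsq_inner power2_norm_eq_inner)

lemma re_cinner: "Re (cinner a b) = inner a b"
  unfolding cinner_def inner_vec_def by (simp add: Re_sum inner_complex_def)

lemma cinner_adj: "cinner a (M *v b) = cinner (hermitian_transpose M *v a) b"
proof -
  have "cinner a (M *v b) = (\<Sum>i\<in>UNIV. \<Sum>j\<in>UNIV. cnj (a$i) * M$i$j * b$j)"
    unfolding cinner_def matrix_vector_mult_def by (simp add: sum_distrib_left mult_ac)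
  also have "\<dots> = (\<Sum>j\<in>UNIV. \<Sum>i\<in>UNIV. cnj (a$i) * M$i$j * b$j)"
    by (rule sum.swap)
  also have "\<dots> = cinner (hermitian_transpose M *v a) b"
    unfolding cinner_def matrix_vector_mult_def hermitian_transpose_def
    by (simp add: sum_distrib_right sum_distrib_left mult_ac)
  finally show ?thesis .
qed

lemma herm_herm: "hermitian_transpose (hermitian_transpose M) = M"
  by (simp add: hermitian_transpose_def vec_eq_iff)

lemma sR: "complex_of_real t *s (v::complex^'n) = t *\<^sub>R v"
  by (simp add: vec_eq_iff scaleR_conv_of_real[where 'a=complex])

lemma mv_scaleR: "(M::complex^'m^'n) *v (t *\<^sub>R v) = t *\<^sub>R (M *v v)"
  by (metis sR vector_scalar_commute)

lemma full_rank_inj: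
  fixes A :: "complex^'k^'n"
  assumes "rank A = CARD('k)" and "A *v z = 0"
  shows "z = 0"
proof -
  have "vec.span (rows A) = UNIV"
    using assms(1) vec.dim_eq_full[of "rows A"] unfolding row_rank_def_gen vec.dimension_def
    by (simp add: card_cart_basis)
  then obtain B :: "complex^'n^'k" where "B ** A = mat 1"
    using matrix_left_invertible_span_rows_gen by blast
  then have "z = B *v (A *v z)" by (simp add: matrix_vector_mul_assoc)
  with assms(2) show ?thesis by simp
qed

lemma gram_inv:
  fixes A :: "complex^'k^'n"
  assumes "rank A = CARD('k)"
  defines "G \<equiv> hermitian_transpose A ** A"
  shows "G ** matrix_inv G = mat 1 \<and> matrix_inv G ** G = mat 1"
proof -
  have "z = 0" if "G *v z = 0" for z
  proof -
    have "cinner z (hermitian_transpose A *v (A *v z)) = 0"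
      using that by (simp add: G_def matrix_vector_mul_assoc cinner_def)
    then have "cinner (A *v z) (A *v z) = 0"
      using cinner_adj[of z "hermitian_transpose A" "A *v z"] by (simp add: herm_herm)
    then have "inner (A *v z) (A *v z) = 0" by (metis re_cinner zero_complex.simps(1))
    then have "A *v z = 0" by simp
    then show ?thesis using full_rank_inj[OF assms(1)] by blast
  qed
  then have "\<exists>B. B ** G = mat 1" using matrix_left_invertible_ker by blast
  then have "invertible G" using invertible_left_inverse by blast
  then show ?thesis unfolding invertible_def matrix_inv_def by (rule someI_ex)
qed

lemma cinner_zero_left[simp]: "cinner 0 z = 0"
  by (simp add: cinner_def)

lemma projA:
  fixes A :: "complex^'k^'n" and M :: "complex^'k^'k"
  assumes GM: "(hermitian_transpose A ** A) ** M = mat 1"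
    and MG: "M ** (hermitian_transpose A ** A) = mat 1"
  defines "P \<equiv> mat 1 - A ** M ** hermitian_transpose A"
  shows "hermitian_transpose A *v (P *v w) = 0"
    and "P *v (A *v z) = 0"
    and "inner (P *v w) (A *v z) = 0"
    and "normsq (P *v w) \<le> normsq w"
    and "normsq (P *v w) = normsq w \<longleftrightarrow> hermitian_transpose A *v w = 0"
    and "hermitian_transpose A *v w = 0 \<Longrightarrow> P *v w = w"
    and "\<exists>y. P *v w = w - A *v y"
proof -
  let ?H = "hermitian_transpose A"
  have Pw: "P *v v = v - A *v (M *v (?H *v v))" for v
    by (simp add: P_def matrix_vector_mult_diff_rdistrib matrix_vector_mul_assoc matrix_mul_assoc)
  have 1: "?H *v (P *v v) = 0" for v
  proof -
    have "?H *v (A *v (M *v (?H *v v))) = ((?H ** A) ** M) *v (?H *v v)"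
      by (simp add: matrix_vector_mul_assoc matrix_mul_assoc)
    then show ?thesis by (simp add: Pw matrix_vector_mult_diff_distrib GM)
  qed
  then show "?H *v (P *v w) = 0" .
  have "M *v (?H *v (A *v z)) = (M ** (?H ** A)) *v z"
    by (simp add: matrix_vector_mul_assoc matrix_mul_assoc)
  then show "P *v (A *v z) = 0" by (simp add: Pw MG)
  have 3: "inner (P *v v) (A *v y) = 0" for v y
  proof -
    have "inner (P *v v) (A *v y) = Re (cinner (P *v v) (A *v y))" by (simp add: re_cinner)
    also have "\<dots> = Re (cinner (?H *v (P *v v)) y)" by (simp add: cinner_adj)
    also have "\<dots> = 0" by (simp add: 1)
    finally show ?thesis .
  qed
  then show "inner (P *v w) (A *v z) = 0" .
  define y where "y = M *v (?H *v w)"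
  have wd: "w = P *v w + A *v y" by (simp add: Pw y_def)
  have pyth: "normsq w = normsq (P *v w) + normsq (A *v y)"
  proof -
    have "normsq w = inner (P *v w + A *v y) (P *v w + A *v y)" using wd normsq_inner by metis
    also have "\<dots> = normsq (P *v w) + normsq (A *v y)"
      using 3[of w y] by (simp add: inner_add_left inner_add_right normsq_inner inner_commute)
    finally show ?thesis .
  qed
  have nn: "normsq v \<ge> 0" for v :: "complex^'n" by (simp add: normsq_inner)
  show "normsq (P *v w) \<le> normsq w" using pyth nn[of "A *v y"] by linarith
  show "normsq (P *v w) = normsq w \<longleftrightarrow> ?H *v w = 0"
  proof
    assume "normsq (P *v w) = normsq w"
    then have "normsq (A *v y) = 0" using pyth by linarith
    then have "A *v y = 0" by (simp add: normsq_inner)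
    then have "P *v w = w" using wd by simp
    then show "?H *v w = 0" using 1[of w] by simp
  next
    assume "?H *v w = 0"
    then have "P *v w = w" by (simp add: Pw)
    then show "normsq (P *v w) = normsq w" by simp
  qed
  show "?H *v w = 0 \<Longrightarrow> P *v w = w" by (simp add: Pw)
  show "\<exists>y. P *v w = w - A *v y" using Pw by blast
qed

definition Wv :: "real \<Rightarrow> ('n \<Rightarrow> complex) \<Rightarrow> ('n \<Rightarrow> real) \<Rightarrow> complex^'n" where
  "Wv c E g = (\<chi> n. \<i> * complex_of_real (c * g n) * E n)"

lemma Wv_lin: "Wv c E f - t *\<^sub>R Wv c E g = Wv c E (\<lambda>n. f n - t * g n)"
  unfolding sR[symmetric] by (simp add: Wv_def vec_eq_iff algebra_simps)

lemma Wv_shift: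
  assumes "\<And>n. h n = h' n + m"
  shows "Wv c E h = Wv c E h' + (\<i> * complex_of_real (c*m)) *s (\<chi> n. E n)"
  by (simp add: Wv_def vec_eq_iff assms algebra_simps)

lemma inner_cnj: "inner (a::complex) b = Re (cnj a * b)"
  by (simp add: inner_complex_def)

lemma unit_cnj: "cmod z = 1 \<Longrightarrow> cnj z * z = 1"
  by (metis complex_norm_square mult.commute of_real_1 one_power2)

lemma Wv_inner:
  assumes "\<And>n. cmod (E n) = 1"
  shows "inner (Wv c E f) (Wv c E g) = c^2 * (\<Sum>n\<in>UNIV. f n * g n)"
proof -
  have "inner (\<i> * complex_of_real (c * f n) * E n) (\<i> * complex_of_real (c * g n) * E n)
     = c^2 * (f n * g n)" for n
  proof -
    have "cnj (\<i> * complex_of_real (c * f n) * E n) * (\<i> * complex_of_real (c * g n) * E n)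
       = complex_of_real (c^2 * (f n * g n)) * (cnj (E n) * E n)"
      by (simp add: algebra_simps power2_eq_square)
    then show ?thesis using unit_cnj[OF assms[of n]] by (simp add: inner_cnj)
  qed
  then show ?thesis unfolding inner_vec_def Wv_def by (simp add: sum_distrib_left)
qed

lemma Wv_normsq:
  assumes "\<And>n. cmod (E n) = 1"
  shows "normsq (Wv c E g) = c^2 * (\<Sum>n\<in>UNIV. (g n)^2)"
  using Wv_inner[OF assms, where c=c and f=g and g=g] by (simp add: normsq_inner power2_eq_square)

lemma projk:
  fixes E :: "'n::finite \<Rightarrow> complex"
  assumes E1: "\<And>n. cmod (E n) = 1"
  shows "proj_perp_vec (\<chi> n. E n) *v Wv c E g = Wv c E (\<lambda>n. g n - mean g)"
proof -
  let ?N = "real CARD('n)"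
  have ns: "normsq (\<chi> n. E n) = ?N" by (simp add: normsq_def E1)
  have Npos: "?N > 0" by simp
  have t: "E i * cnj (E j) / complex_of_real ?N * (\<i> * complex_of_real (c * g j) * E j)
      = (E i * \<i> * complex_of_real c / complex_of_real ?N) * complex_of_real (g j)" for i j
  proof -
    have "E i * cnj (E j) / complex_of_real ?N * (\<i> * complex_of_real (c * g j) * E j)
      = (E i * \<i> * complex_of_real c / complex_of_real ?N) * complex_of_real (g j) * (cnj (E j) * E j)"
      by (simp add: algebra_simps)
    then show ?thesis using unit_cnj[OF E1[of j]] by simp
  qed
  have s: "(\<Sum>j\<in>UNIV. E i * cnj (E j) / complex_of_real ?N * (\<i> * complex_of_real (c * g j) * E j))
     = (E i * \<i> * complex_of_real c / complex_of_real ?N) * complex_of_real (\<Sum>j\<in>UNIV. g j)" for i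
    by (simp only: t sum_distrib_left of_real_sum)
  have c: "\<i> * complex_of_real (c * g i) * E i -
      (E i * \<i> * complex_of_real c / complex_of_real ?N) * complex_of_real (\<Sum>j\<in>UNIV. g j)
      = \<i> * complex_of_real (c * (g i - mean g)) * E i" for i
    using Npos by (simp add: mean_def field_simps)
  show ?thesis
  proof -
    let ?B = "(\<chi> i j. E i * cnj (E j) / complex_of_real ?N) :: complex^'n^'n"
    have cm: "(?B *v Wv c E g) $ i
      = (E i * \<i> * complex_of_real c / complex_of_real ?N) * complex_of_real (\<Sum>j\<in>UNIV. g j)" for i
      unfolding matrix_vector_mult_def Wv_def by (simp only: vec_lambda_beta s)
    have "(mat 1 - ?B) *v Wv c E g = Wv c E g - ?B *v Wv c E g"
      by (simp add: matrix_vector_mult_diff_rdistrib)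
    also have "\<dots> = Wv c E (\<lambda>n. g n - mean g)"
      unfolding vec_eq_iff using cm c by (simp add: Wv_def)
    finally show ?thesis unfolding proj_perp_vec_def ns vec_lambda_beta .
  qed
qed

lemma sum_centered: "(\<Sum>n\<in>UNIV. (g n - mean g)) = (0::real)"
  by (simp add: sum_subtractf mean_def)

lemma core:
  fixes A :: "complex^'k^'n" and c :: real and E :: "'n \<Rightarrow> complex" and f g :: "'n \<Rightarrow> real" and col :: 'k
  assumes GM: "(hermitian_transpose A ** A) ** matrix_inv (hermitian_transpose A ** A) = mat 1"
    and MG: "matrix_inv (hermitian_transpose A ** A) ** (hermitian_transpose A ** A) = mat 1"
    and E1: "\<And>n. cmod (E n) = 1"
    and col: "A *v axis col 1 = (\<chi> n. E n)"
    and cnz: "c \<noteq> 0"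
    and Sgg_pos: "(\<Sum>n\<in>UNIV. (g n - mean g)^2) > 0"
  defines "F \<equiv> \<lambda>\<zeta>::real. normsq (proj_perp A *v (Wv c E f - complex_of_real \<zeta> *s Wv c E g))"
    and "zs \<equiv> Re (cinner (Wv c E f) (proj_perp_vec (\<chi> n. E n) *v Wv c E g)) / normsq (proj_perp_vec (\<chi> n. E n) *v Wv c E g)"
    and "Sff \<equiv> (\<Sum>n\<in>UNIV. (f n - mean f)^2)"
    and "Sfg \<equiv> (\<Sum>n\<in>UNIV. (f n - mean f) * (g n - mean g))"
    and "Sgg \<equiv> (\<Sum>n\<in>UNIV. (g n - mean g)^2)"
  shows "(INF \<zeta>. F \<zeta>) \<le> c^2 * (Sff - Sfg^2/Sgg) \<and>
    ((INF \<zeta>. F \<zeta>) = c^2 * (Sff - Sfg^2/Sgg) \<longleftrightarrow>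
      hermitian_transpose A *v (proj_perp_vec (\<chi> n. E n) *v (Wv c E f - complex_of_real zs *s Wv c E g)) = 0)"
proof -
  let ?P = "proj_perp A" and ?Pk = "proj_perp_vec (\<chi> n. E n)" and ?H = "hermitian_transpose A"
  define \<alpha> where "\<alpha> n = f n - mean f" for n
  define \<beta> where "\<beta> n = g n - mean g" for n
  note PA = projA[OF GM MG, folded proj_perp_def]
  have pf: "?Pk *v Wv c E f = Wv c E \<alpha>" unfolding \<alpha>_def[abs_def] by (rule projk[OF E1])
  have pg: "?Pk *v Wv c E g = Wv c E \<beta>" unfolding \<beta>_def[abs_def] by (rule projk[OF E1])
  have sb: "(\<Sum>n\<in>UNIV. \<beta> n) = 0" unfolding \<beta>_def by (rule sum_centered)
  have Sgg: "Sgg > 0" using Sgg_pos Sgg_def by simp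
  have fb: "(\<Sum>n\<in>UNIV. f n * \<beta> n) = Sfg"
  proof -
    have "(\<Sum>n\<in>UNIV. f n * \<beta> n) = (\<Sum>n\<in>UNIV. \<alpha> n * \<beta> n + mean f * \<beta> n)"
      by (rule sum.cong) (auto simp: \<alpha>_def algebra_simps)
    also have "\<dots> = (\<Sum>n\<in>UNIV. \<alpha> n * \<beta> n) + mean f * (\<Sum>n\<in>UNIV. \<beta> n)"
      by (simp only: sum.distrib sum_distrib_left)
    also have "\<dots> = Sfg" using sb unfolding Sfg_def \<alpha>_def \<beta>_def by simp
    finally show ?thesis .
  qed
  have bb: "(\<Sum>n\<in>UNIV. (\<beta> n)^2) = Sgg" unfolding Sgg_def \<beta>_def ..
  have aa: "(\<Sum>n\<in>UNIV. (\<alpha> n)^2) = Sff" unfolding Sff_def \<alpha>_def ..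
  have ab: "(\<Sum>n\<in>UNIV. \<alpha> n * \<beta> n) = Sfg" unfolding Sfg_def \<alpha>_def \<beta>_def ..
  have nsb: "normsq (Wv c E \<beta>) = c^2 * Sgg" using Wv_normsq[where E=E, OF E1] bb by simp
  have zs_eq: "zs = Sfg / Sgg"
  proof -
    have "zs = inner (Wv c E f) (Wv c E \<beta>) / normsq (Wv c E \<beta>)"
      unfolding zs_def pg re_cinner ..
    also have "\<dots> = (c^2 * Sfg) / (c^2 * Sgg)" using Wv_inner[where E=E, OF E1] fb nsb by simp
    also have "\<dots> = Sfg / Sgg" using cnz by simp
    finally show ?thesis .
  qed
  define ws where "ws = Wv c E (\<lambda>n. \<alpha> n - zs * \<beta> n)"
  have Pk_ws: "?Pk *v (Wv c E f - complex_of_real zs *s Wv c E g) = ws"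
  proof -
    have "?Pk *v (Wv c E f - zs *\<^sub>R Wv c E g) = ?Pk *v Wv c E f - zs *\<^sub>R (?Pk *v Wv c E g)"
      by (simp only: matrix_vector_mult_diff_distrib mv_scaleR)
    then show ?thesis unfolding sR pf pg Wv_lin ws_def .
  qed
  have Fz: "F z = normsq (?P *v Wv c E (\<lambda>n. \<alpha> n - z * \<beta> n))" for z
  proof -
    have "Wv c E f - complex_of_real z *s Wv c E g = Wv c E (\<lambda>n. f n - z * g n)"
      unfolding sR Wv_lin ..
    also have "\<dots> = Wv c E (\<lambda>n. \<alpha> n - z * \<beta> n) + (\<i> * complex_of_real (c*(mean f - z * mean g))) *s (\<chi> n. E n)"
      by (rule Wv_shift) (simp add: \<alpha>_def \<beta>_def algebra_simps)
    finally have e: "Wv c E f - complex_of_real z *s Wv c E g = \<dots>" .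
    have "?P *v (\<chi> n. E n) = 0" using PA(2)[of "axis col 1"] col by simp
    then show ?thesis unfolding F_def e matrix_vector_right_distrib vector_scalar_commute by simp
  qed
  have nws: "normsq ws = c^2 * (Sff - Sfg^2/Sgg)"
  proof -
    have "(\<Sum>n\<in>UNIV. (\<alpha> n - zs * \<beta> n)^2) = (\<Sum>n\<in>UNIV. (\<alpha> n)^2 - 2 * zs * (\<alpha> n * \<beta> n) + zs^2 * (\<beta> n)^2)"
      by (rule sum.cong) (auto simp: power2_eq_square algebra_simps)
    also have "\<dots> = Sff - 2 * zs * Sfg + zs^2 * Sgg"
      by (simp add: sum.distrib sum_subtractf aa ab bb flip: sum_distrib_left)
    also have "\<dots> = Sff - Sfg^2/Sgg" using Sgg unfolding zs_eq by (simp add: field_simps power2_eq_square)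
    finally show ?thesis unfolding ws_def using Wv_normsq[where E=E, OF E1] by simp
  qed
  have F0: "F z \<ge> 0" for z unfolding F_def normsq_inner by simp
  have bdd: "bdd_below (range F)" by (meson F0 bdd_belowI2)
  have Fzs: "F zs = normsq (?P *v ws)" unfolding Fz ws_def ..
  have Fle: "F zs \<le> normsq ws" unfolding Fzs by (rule PA(4))
  have I1: "(INF \<zeta>. F \<zeta>) \<le> F zs" by (rule cINF_lower[OF bdd]) simp
  show ?thesis
  proof (intro conjI iffI)
    show "(INF \<zeta>. F \<zeta>) \<le> c^2 * (Sff - Sfg^2/Sgg)" using I1 Fle nws by linarith
  next
    assume eq: "(INF \<zeta>. F \<zeta>) = c^2 * (Sff - Sfg^2/Sgg)"
    have "normsq (?P *v ws) = normsq ws" using I1 Fle Fzs nws eq PA(4)[of ws] by linarith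
    then show "?H *v (?Pk *v (Wv c E f - complex_of_real zs *s Wv c E g)) = 0"
      unfolding Pk_ws using PA(5) by blast
  next
    assume h: "?H *v (?Pk *v (Wv c E f - complex_of_real zs *s Wv c E g)) = 0"
    then have h': "?H *v ws = 0" using Pk_ws by simp
    have Pws: "?P *v ws = ws" using PA(6) h' by blast
    obtain y where y: "?P *v Wv c E \<beta> = Wv c E \<beta> - A *v y" using PA(7) by blast
    have i1: "inner ws (A *v y) = 0" using PA(3)[of ws y] Pws by simp
    have i2: "inner ws (Wv c E \<beta>) = 0"
    proof -
      have "inner ws (Wv c E \<beta>) = c^2 * (\<Sum>n\<in>UNIV. (\<alpha> n - zs * \<beta> n) * \<beta> n)"
        unfolding ws_def by (rule Wv_inner[where E=E, OF E1])
      also have "(\<Sum>n\<in>UNIV. (\<alpha> n - zs * \<beta> n) * \<beta> n) = Sfg - zs * Sgg"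
        using bb by (simp add: algebra_simps power2_eq_square sum_subtractf ab flip: sum_distrib_left)
      also have "Sfg - zs * Sgg = 0" using Sgg unfolding zs_eq by simp
      finally show ?thesis by simp
    qed
    have iq: "inner ws (?P *v Wv c E \<beta>) = 0" unfolding y inner_diff_right i1 i2 by simp
    have ge: "F z \<ge> c^2 * (Sff - Sfg^2/Sgg)" for z
    proof -
      define t where "t = z - zs"
      have "Wv c E (\<lambda>n. \<alpha> n - z * \<beta> n) = ws - t *\<^sub>R Wv c E \<beta>"
        unfolding ws_def Wv_lin t_def by (simp add: algebra_simps)
      then have "?P *v Wv c E (\<lambda>n. \<alpha> n - z * \<beta> n) = ws - t *\<^sub>R (?P *v Wv c E \<beta>)"
        by (simp add: matrix_vector_mult_diff_distrib mv_scaleR Pws)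
      then have "F z = normsq (ws - t *\<^sub>R (?P *v Wv c E \<beta>))" using Fz by simp
      also have "\<dots> = normsq ws - 2 * t * inner ws (?P *v Wv c E \<beta>) + t^2 * normsq (?P *v Wv c E \<beta>)"
        unfolding normsq_inner
        by (simp add: inner_diff_left inner_diff_right inner_commute power2_eq_square algebra_simps)
      also have "\<dots> \<ge> normsq ws" unfolding iq by (simp add: normsq_inner)
      finally show ?thesis using nws by simp
    qed
    have "(INF \<zeta>. F \<zeta>) \<ge> c^2 * (Sff - Sfg^2/Sgg)" by (rule cINF_greatest) (auto intro: ge)
    then show "(INF \<zeta>. F \<zeta>) = c^2 * (Sff - Sfg^2/Sgg)" using I1 Fle nws by linarith
  qed
qed

lemma re_cross:
  assumes E1: "\<And>n. cmod (E n) = 1"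
  shows "Re (cinner (Wv c E f) (proj_perp_vec (\<chi> n. E n) *v Wv c E g))
    = c^2 * (\<Sum>n\<in>UNIV. (f n - mean f) * (g n - mean g))"
proof -
  have sb: "(\<Sum>n\<in>UNIV. (g n - mean g)) = 0" by (rule sum_centered)
  have "(\<Sum>n\<in>UNIV. f n * (g n - mean g)) = (\<Sum>n\<in>UNIV. (f n - mean f) * (g n - mean g) + mean f * (g n - mean g))"
    by (rule sum.cong) (auto simp: algebra_simps)
  also have "\<dots> = (\<Sum>n\<in>UNIV. (f n - mean f) * (g n - mean g)) + mean f * (\<Sum>n\<in>UNIV. (g n - mean g))"
    by (simp only: sum.distrib sum_distrib_left)
  finally have fb: "(\<Sum>n\<in>UNIV. f n * (g n - mean g)) = (\<Sum>n\<in>UNIV. (f n - mean f) * (g n - mean g))"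
    using sb by simp
  show ?thesis unfolding projk[OF E1] re_cinner Wv_inner[where E=E, OF E1] fb ..
qed

lemma bound_eq:
  fixes x y :: "'n::finite \<Rightarrow> real"
  assumes "var y > 0" and "lam > 0"
  shows "4 * pi^2 * real CARD('n) / lam^2 * (var x - (cov x y)^2 / var y)
     = (2*pi/lam)^2 * ((\<Sum>n\<in>UNIV. (x n - mean x)^2) - (\<Sum>n\<in>UNIV. (x n - mean x) * (y n - mean y))^2 / (\<Sum>n\<in>UNIV. (y n - mean y)^2))"
proof -
  let ?N = "real CARD('n)"
  have N: "?N > 0" by simp
  have S: "(\<Sum>n\<in>UNIV. (y n - mean y)^2) > 0" using assms(1) N unfolding var_def by (simp add: zero_less_divide_iff)
  show ?thesis using N S assms(2) unfolding var_def cov_def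
    by (simp add: field_simps power2_eq_square)
qed

theorem mainTheorem3:
  fixes lam :: real and x y :: "'n::finite \<Rightarrow> real" and u v :: "'k::finite \<Rightarrow> real" and k :: 'k
  assumes "CARD('n) > CARD('k)"
    and "lam > 0"
    and "rank (steer_mat lam x y u v) = CARD('k)"
    and "var x > 0" and "var y > 0"
    and "proj_perp (steer_mat lam x y u v) *v steer_du lam x y (u k) (v k) \<noteq> 0"
    and "proj_perp (steer_mat lam x y u v) *v steer_dv lam x y (u k) (v k) \<noteq> 0"
  shows "omega_u lam x y u v k \<le> 4 * pi^2 * real CARD('n) / lam^2 * (var x - (cov x y)^2 / var y)
    \<and> omega_v lam x y u v k \<le> 4 * pi^2 * real CARD('n) / lam^2 * (var y - (cov x y)^2 / var x)
    \<and> (omega_u lam x y u v k = 4 * pi^2 * real CARD('n) / lam^2 * (var x - (cov x y)^2 / var y)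
         \<longleftrightarrow> hermitian_transpose (steer_mat lam x y u v) *v
               (proj_perp_vec (steer lam x y (u k) (v k)) *v
                 (steer_du lam x y (u k) (v k) - complex_of_real (zeta_u lam x y (u k) (v k)) *s steer_dv lam x y (u k) (v k))) = 0)
    \<and> (omega_v lam x y u v k = 4 * pi^2 * real CARD('n) / lam^2 * (var y - (cov x y)^2 / var x)
         \<longleftrightarrow> hermitian_transpose (steer_mat lam x y u v) *v
               (proj_perp_vec (steer lam x y (u k) (v k)) *v
                 (steer_dv lam x y (u k) (v k) - complex_of_real (zeta_v lam x y (u k) (v k)) *s steer_du lam x y (u k) (v k))) = 0)"
proof -
  let ?A = "steer_mat lam x y u v"
  define c where "c = 2*pi/lam"
  define E where "E n = cis (2*pi/lam * (x n * u k + y n * v k))" for n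
  have cnz: "c \<noteq> 0" using assms(2) by (simp add: c_def)
  have E1: "\<And>n. cmod (E n) = 1" by (simp add: E_def)
  have du: "steer_du lam x y (u k) (v k) = Wv c E x" by (simp add: steer_du_def Wv_def c_def E_def)
  have dv: "steer_dv lam x y (u k) (v k) = Wv c E y" by (simp add: steer_dv_def Wv_def c_def E_def)
  have st: "steer lam x y (u k) (v k) = (\<chi> n. E n)" by (simp add: steer_def E_def)
  have dl: "(\<Sum>j\<in>UNIV. h j * (if j = k then 1 else 0)) = h k" for h :: "'k \<Rightarrow> complex"
  proof -
    have "(\<Sum>j\<in>UNIV. h j * (if j = k then 1 else 0)) = (\<Sum>j\<in>UNIV. if j = k then h j else 0)"
      by (rule sum.cong) auto
    then show ?thesis by simp
  qed
  have col: "?A *v axis k 1 = (\<chi> n. E n)"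
    using dl by (simp add: vec_eq_iff matrix_vector_mult_def axis_def steer_mat_def steer_def E_def)
  note gi = gram_inv[OF assms(3)]
  have Sy: "(\<Sum>n\<in>UNIV. (y n - mean y)^2) > 0" using assms(5) unfolding var_def by (simp add: zero_less_divide_iff)
  have Sx: "(\<Sum>n\<in>UNIV. (x n - mean x)^2) > 0" using assms(4) unfolding var_def by (simp add: zero_less_divide_iff)
  note C1 = core[OF gi[THEN conjunct1] gi[THEN conjunct2] E1 col cnz Sy, where f=x]
  note C2 = core[OF gi[THEN conjunct1] gi[THEN conjunct2] E1 col cnz Sx, where f=y]
  have cv: "cov y x = cov x y" unfolding cov_def by (simp add: mult.commute)
  have ou: "omega_u lam x y u v k = (INF \<zeta>. normsq (proj_perp ?A *v (Wv c E x - complex_of_real \<zeta> *s Wv c E y)))"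
    unfolding omega_u_def du dv ..
  have ov: "omega_v lam x y u v k = (INF \<zeta>. normsq (proj_perp ?A *v (Wv c E y - complex_of_real \<zeta> *s Wv c E x)))"
    unfolding omega_v_def du dv ..
  have zu: "zeta_u lam x y (u k) (v k) = Re (cinner (Wv c E x) (proj_perp_vec (\<chi> n. E n) *v Wv c E y)) / normsq (proj_perp_vec (\<chi> n. E n) *v Wv c E y)"
    unfolding zeta_u_def Let_def du dv st ..
  have zv: "zeta_v lam x y (u k) (v k) = Re (cinner (Wv c E y) (proj_perp_vec (\<chi> n. E n) *v Wv c E x)) / normsq (proj_perp_vec (\<chi> n. E n) *v Wv c E x)"
    unfolding zeta_v_def Let_def du dv st re_cross[where E=E, OF E1] by (simp add: mult.commute)
  have b1: "4 * pi^2 * real CARD('n) / lam^2 * (var x - (cov x y)^2 / var y)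
     = c^2 * ((\<Sum>n\<in>UNIV. (x n - mean x)^2) - (\<Sum>n\<in>UNIV. (x n - mean x) * (y n - mean y))^2 / (\<Sum>n\<in>UNIV. (y n - mean y)^2))"
    unfolding c_def by (rule bound_eq[OF assms(5) assms(2)])
  have b2: "4 * pi^2 * real CARD('n) / lam^2 * (var y - (cov x y)^2 / var x)
     = c^2 * ((\<Sum>n\<in>UNIV. (y n - mean y)^2) - (\<Sum>n\<in>UNIV. (y n - mean y) * (x n - mean x))^2 / (\<Sum>n\<in>UNIV. (x n - mean x)^2))"
    unfolding c_def cv[symmetric] by (rule bound_eq[OF assms(4) assms(2)])
  show ?thesis
    unfolding ou ov zu zv b1 b2 du dv st using C1 C2 by blast
qed

end
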